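(* Consider BALM applied to $\min_{x\in\mathcal{X}} f(x)$ s.t. $Ax=b$ (with $\Lambda=\mathbb{R}^m$) or s.t. $Ax\le b$ (with $\Lambda=\mathbb{R}^m_+$), with parameters $\eta_k>0$, and define for $T\ge1$ $$\tilde x_T=\frac{\sum_{k=0}^{T-1}\eta_k x_{k+1}}{\sum_{k=0}^{T-1}\eta_k},\qquad \tilde\lambda_T=\frac{\sum_{k=0}^{T-1}\eta_k \lambda_{k+1}}{\sum_{k=0}^{T-1}\eta_k}.$$ Then for all $x\in\mathcal{X}$, $\lambda\in\Lambda$, $$L(\tilde x_T,\lambda)-L(x,\tilde\lambda_T)\le\frac{D_h(\lambda,\lambda_0)}{\sum_{k=0}^{T-1}\eta_k},$$ and, if $x^*$ is an optimal solution of the primal problem, for all $\lambda\in\Lambda$, $$f(\tilde x_T)-f(x^* )+\lambda^\top(A\tilde x_T-b)\le\frac{D_h(\lambda,\lambda_0)}{\sum_{k=0}^{T-1}\eta_k}.$$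
   Context: $f$ is closed, convex (and coercive), $\mathcal{X}\subseteq\mathbb{R}^n$ closed convex, $A\in\mathbb{R}^{m\times n}$, $b\in\mathbb{R}^m$, $L(x,\lambda)=f(x)+\lambda^\top(Ax-b)$. $h:\Lambda\to\mathbb{R}$ is proper, coercive, strictly convex and continuously differentiable on $\Lambda$; $D_h(\lambda,\tilde\lambda)=h(\lambda)-h(\tilde\lambda)-\nabla h(\tilde\lambda)^\top(\lambda-\tilde\lambda)$. BALM: given $\lambda_0\in\Lambda$, for $k\ge0$, $(x_{k+1},\lambda_{k+1})\in\mathcal{X}\times\Lambda$ is a saddle point on $\mathcal{X}\times\Lambda$ (min in $x$, max in $\lambda$) of $L(x,\lambda)-\frac1{\eta_k}D_h(\lambda,\lambda_k)$ (assumed to exist). *)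

theory Defs
  imports "HOL-Analysis.Analysis"
begin

definition strict_convex_on_set :: "'a::real_vector set \<Rightarrow> ('a \<Rightarrow> real) \<Rightarrow> bool" where
  "strict_convex_on_set S g \<longleftrightarrow> convex S \<and>
     (\<forall>x\<in>S. \<forall>y\<in>S. \<forall>u::real. x \<noteq> y \<and> 0 < u \<and> u < 1 \<longrightarrow>
        g ((1 - u) *\<^sub>R x + u *\<^sub>R y) < (1 - u) * g x + u * g y)"

definition coercive_on :: "'a::real_normed_vector set \<Rightarrow> ('a \<Rightarrow> real) \<Rightarrow> bool" where
  "coercive_on S g \<longleftrightarrow> (\<forall>M. \<exists>R. \<forall>x\<in>S. R \<le> norm x \<longrightarrow> M \<le> g x)"

definition closed_fun :: "('a::real_normed_vector \<Rightarrow> real) \<Rightarrow> bool" where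
  "closed_fun g \<longleftrightarrow> closed {(x, t). g x \<le> t}"

definition lagr :: "(real^'n \<Rightarrow> real) \<Rightarrow> real^'n^'m \<Rightarrow> real^'m \<Rightarrow> real^'n \<Rightarrow> real^'m \<Rightarrow> real" where
  "lagr f A b x l = f x + l \<bullet> (A *v x - b)"

definition bregman :: "('a::real_inner \<Rightarrow> real) \<Rightarrow> ('a \<Rightarrow> 'a) \<Rightarrow> 'a \<Rightarrow> 'a \<Rightarrow> real" where
  "bregman h gh l l' = h l - h l' - gh l' \<bullet> (l - l')"

text \<open>Dual domain: eqc = True means constraints A x = b, Lambda = R^m;
  eqc = False means constraints A x <= b, Lambda = nonnegative orthant.\<close>
definition dual_dom :: "bool \<Rightarrow> (real^'m) set" where
  "dual_dom eqc = (if eqc then UNIV else {l. \<forall>i. 0 \<le> l $ i})"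

definition feasible :: "bool \<Rightarrow> real^'n^'m \<Rightarrow> real^'m \<Rightarrow> real^'n \<Rightarrow> bool" where
  "feasible eqc A b x \<longleftrightarrow> (if eqc then A *v x = b else (\<forall>i. (A *v x) $ i \<le> b $ i))"

definition saddle_point :: "('a \<Rightarrow> 'b \<Rightarrow> real) \<Rightarrow> 'a set \<Rightarrow> 'b set \<Rightarrow> 'a \<Rightarrow> 'b \<Rightarrow> bool" where
  "saddle_point Phi X Lam xs ls \<longleftrightarrow> xs \<in> X \<and> ls \<in> Lam \<and>
     (\<forall>x\<in>X. \<forall>l\<in>Lam. Phi xs l \<le> Phi xs ls \<and> Phi xs ls \<le> Phi x ls)"

end

theory Submission
  imports Defs "HOL-Analysis.Analysis"
begin

lemma dir_lim:
  fixes h :: "'a::real_normed_vector \<Rightarrow> real"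
  assumes cvx: "convex L" and l0: "l0 \<in> L" and l1: "l1 \<in> L"
    and hd: "\<And>l. l \<in> L \<Longrightarrow> (h has_derivative (\<lambda>v. G l v)) (at l within L)"
    and lin: "bounded_linear (G l0)"
  shows "((\<lambda>t. (h (l0 + t *\<^sub>R (l1 - l0)) - h l0) / t) \<longlongrightarrow> G l0 (l1 - l0)) (at 0 within {0..1})"
    and "at (0::real) within {0..1} \<noteq> bot"
proof -
  have img: "(\<lambda>t. l0 + t *\<^sub>R (l1 - l0)) ` {0..1} \<subseteq> L"
  proof
    fix z assume "z \<in> (\<lambda>t. l0 + t *\<^sub>R (l1 - l0)) ` {0..1::real}"
    then obtain t where t: "0 \<le> t" "t \<le> 1" "z = l0 + t *\<^sub>R (l1 - l0)" by auto
    have "z = (1 - t) *\<^sub>R l0 + t *\<^sub>R l1" using t by (simp add: algebra_simps)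
    then show "z \<in> L" using cvx l0 l1 t by (simp add: convex_alt)
  qed
  have lin_d: "((\<lambda>t. l0 + t *\<^sub>R (l1 - l0)) has_derivative (\<lambda>t. t *\<^sub>R (l1 - l0))) (at 0 within {0..1})"
    by (auto intro!: derivative_eq_intros)
  have "((\<lambda>t. h (l0 + t *\<^sub>R (l1 - l0))) has_derivative (\<lambda>y. G (l0 + 0 *\<^sub>R (l1 - l0)) (y *\<^sub>R (l1 - l0)))) (at 0 within {0..1})"
    by (rule has_derivative_in_compose2[OF hd img _ lin_d]) auto
  moreover have "(\<lambda>y. G (l0 + 0 *\<^sub>R (l1 - l0)) (y *\<^sub>R (l1 - l0))) = (*) (G l0 (l1 - l0))"
    using linear_scale[OF bounded_linear.linear[OF lin]] by (auto simp: mult.commute)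
  ultimately have "((\<lambda>t. h (l0 + t *\<^sub>R (l1 - l0))) has_field_derivative G l0 (l1 - l0)) (at 0 within {0..1})"
    by (simp add: has_field_derivative_def)
  then show "((\<lambda>t. (h (l0 + t *\<^sub>R (l1 - l0)) - h l0) / t) \<longlongrightarrow> G l0 (l1 - l0)) (at 0 within {0..1})"
    by (simp add: has_field_derivative_iff)
  show "at (0::real) within {0..1} \<noteq> bot"
    by (simp add: trivial_limit_within islimpt_Icc)
qed

theorem lemma3:
  fixes f :: "real^'n \<Rightarrow> real" and X :: "(real^'n) set"
    and A :: "real^'n^'m" and b :: "real^'m"
    and h :: "real^'m \<Rightarrow> real" and gh :: "real^'m \<Rightarrow> real^'m"
    and eqc :: bool
    and x :: "nat \<Rightarrow> real^'n" and lam :: "nat \<Rightarrow> real^'m" and eta :: "nat \<Rightarrow> real"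
  assumes f_convex: "convex_on UNIV f" and f_closed: "closed_fun f"
    and f_coercive: "coercive_on UNIV f"
    and X_closed: "closed X" and X_convex: "convex X"
    and h_coercive: "coercive_on (dual_dom eqc) h"
    and h_strict: "strict_convex_on_set (dual_dom eqc) h"
    and h_grad: "\<And>l. l \<in> dual_dom eqc \<Longrightarrow>
                   (h has_derivative (\<lambda>v. gh l \<bullet> v)) (at l within dual_dom eqc)"
    and gh_cont: "continuous_on (dual_dom eqc) gh"
    and lam0: "lam 0 \<in> dual_dom eqc"
    and eta_pos: "\<And>k. eta k > 0"
    and balm: "\<And>k. saddle_point
                 (\<lambda>y l. lagr f A b y l - bregman h gh l (lam k) / eta k)
                 X (dual_dom eqc) (x (Suc k)) (lam (Suc k))"
    and T: "T \<ge> 1"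
  shows "(\<forall>y\<in>X. \<forall>l\<in>dual_dom eqc.
            lagr f A b ((\<Sum>k<T. eta k *\<^sub>R x (Suc k)) /\<^sub>R (\<Sum>k<T. eta k)) l
            - lagr f A b y ((\<Sum>k<T. eta k *\<^sub>R lam (Suc k)) /\<^sub>R (\<Sum>k<T. eta k))
          \<le> bregman h gh l (lam 0) / (\<Sum>k<T. eta k))
       \<and> (\<forall>xs. xs \<in> X \<and> feasible eqc A b xs \<and>
               (\<forall>y\<in>X. feasible eqc A b y \<longrightarrow> f xs \<le> f y) \<longrightarrow>
            (\<forall>l\<in>dual_dom eqc.
               f ((\<Sum>k<T. eta k *\<^sub>R x (Suc k)) /\<^sub>R (\<Sum>k<T. eta k)) - f xs
               + l \<bullet> (A *v ((\<Sum>k<T. eta k *\<^sub>R x (Suc k)) /\<^sub>R (\<Sum>k<T. eta k)) - b)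
             \<le> bregman h gh l (lam 0) / (\<Sum>k<T. eta k)))"
proof -
  define D :: "(real^'m) set" where "D = dual_dom eqc"
  have cvxD: "convex D" using h_strict by (simp add: D_def strict_convex_on_set_def)
  have hd: "\<And>l. l \<in> D \<Longrightarrow> (h has_derivative (\<lambda>v. gh l \<bullet> v)) (at l within D)"
    using h_grad by (simp add: D_def)
  have bl: "\<And>l. bounded_linear (\<lambda>v. gh l \<bullet> v)" by (rule bounded_linear_inner_right)
  have hconv: "h ((1 - u) *\<^sub>R p + u *\<^sub>R q) \<le> (1 - u) * h p + u * h q"
    if "p \<in> D" "q \<in> D" "0 \<le> u" "u \<le> 1" for p q u
  proof (cases "p = q \<or> u = 0 \<or> u = 1")
    case True
    then show ?thesis by (auto simp: algebra_simps)
  next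
    case False
    have "0 < u" "u < 1" "p \<noteq> q" using False that by auto
    then show ?thesis using h_strict that unfolding strict_convex_on_set_def D_def
      by (meson less_imp_le)
  qed
  have bnn: "bregman h gh a c \<ge> 0" if a: "a \<in> D" and c: "c \<in> D" for a c
  proof -
    note lim = dir_lim[of D c a h "\<lambda>l v. gh l \<bullet> v", OF cvxD c a hd bl]
    have "gh c \<bullet> (a - c) \<le> h a - h c"
    proof (rule tendsto_upperbound[OF lim(1) _ lim(2)])
      show "\<forall>\<^sub>F t in at 0 within {0..1}. (h (c + t *\<^sub>R (a - c)) - h c) / t \<le> h a - h c"
        unfolding eventually_at_filter
      proof (intro always_eventually allI impI)
        fix t :: real assume t: "t \<noteq> 0" "t \<in> {0..1}"
        have "c + t *\<^sub>R (a - c) = (1 - t) *\<^sub>R c + t *\<^sub>R a" by (simp add: algebra_simps)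
        then have "h (c + t *\<^sub>R (a - c)) \<le> (1 - t) * h c + t * h a"
          using hconv[OF c a] t by auto
        then have "h (c + t *\<^sub>R (a - c)) - h c \<le> t * (h a - h c)" by (simp add: algebra_simps)
        then show "(h (c + t *\<^sub>R (a - c)) - h c) / t \<le> h a - h c"
          using t by (simp add: divide_le_eq mult.commute)
      qed
    qed
    then show ?thesis by (simp add: bregman_def)
  qed
  have lamD: "lam k \<in> D" for k
    using lam0 balm[of "k - 1"] by (cases k) (auto simp: D_def saddle_point_def)
  have xX: "x (Suc k) \<in> X" for k using balm[of k] by (simp add: saddle_point_def)
  have opt: "eta k * ((A *v x (Suc k) - b) \<bullet> (l - lam (Suc k)))
      \<le> (gh (lam (Suc k)) - gh (lam k)) \<bullet> (l - lam (Suc k))" if l: "l \<in> D" for k l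
  proof -
    define c where "c = lam (Suc k)"
    define g where "g = A *v x (Suc k) - b"
    have c: "c \<in> D" using lamD by (simp add: c_def)
    note lim = dir_lim[of D c l h "\<lambda>l v. gh l \<bullet> v", OF cvxD c l hd bl]
    have "eta k * (g \<bullet> (l - c)) + gh (lam k) \<bullet> (l - c) \<le> gh c \<bullet> (l - c)"
    proof (rule tendsto_lowerbound[OF lim(1) _ lim(2)])
      show "\<forall>\<^sub>F t in at 0 within {0..1}. eta k * (g \<bullet> (l - c)) + gh (lam k) \<bullet> (l - c) \<le> (h (c + t *\<^sub>R (l - c)) - h c) / t"
        unfolding eventually_at_filter
      proof (intro always_eventually allI impI)
        fix t :: real assume t: "t \<noteq> 0" "t \<in> {0..1}"
        define z where "z = c + t *\<^sub>R (l - c)"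
        have "z = (1 - t) *\<^sub>R c + t *\<^sub>R l" by (simp add: z_def algebra_simps)
        then have zD: "z \<in> D" using cvxD c l t by (simp add: convex_alt)
        have "lagr f A b (x (Suc k)) z - bregman h gh z (lam k) / eta k
            \<le> lagr f A b (x (Suc k)) c - bregman h gh c (lam k) / eta k"
          using balm[of k] zD xX unfolding saddle_point_def c_def D_def by blast
        then have sd: "lagr f A b (x (Suc k)) z - lagr f A b (x (Suc k)) c
            \<le> (bregman h gh z (lam k) - bregman h gh c (lam k)) / eta k"
          by (simp add: diff_divide_distrib)
        have "lagr f A b (x (Suc k)) z - lagr f A b (x (Suc k)) c = t * (g \<bullet> (l - c))"
          by (simp add: lagr_def z_def g_def algebra_simps inner_commute)
        moreover have "bregman h gh z (lam k) - bregman h gh c (lam k)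
            = h z - h c - t * (gh (lam k) \<bullet> (l - c))"
          by (simp add: bregman_def z_def algebra_simps)
        ultimately have "t * (g \<bullet> (l - c)) \<le> (h z - h c - t * (gh (lam k) \<bullet> (l - c))) / eta k"
          using sd by metis
        then have "eta k * (t * (g \<bullet> (l - c))) \<le> h z - h c - t * (gh (lam k) \<bullet> (l - c))"
          using eta_pos[of k] by (simp add: le_divide_eq mult.commute)
        then have "t * (eta k * (g \<bullet> (l - c)) + gh (lam k) \<bullet> (l - c)) \<le> h z - h c"
          by (simp add: algebra_simps)
        then show "eta k * (g \<bullet> (l - c)) + gh (lam k) \<bullet> (l - c) \<le> (h (c + t *\<^sub>R (l - c)) - h c) / t"
          using t by (simp add: le_divide_eq z_def mult.commute)
      qed
    qed
    then show ?thesis by (simp add: c_def g_def algebra_simps)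
  qed
  have step: "eta k * (lagr f A b (x (Suc k)) l - lagr f A b y (lam (Suc k)))
      \<le> bregman h gh l (lam k) - bregman h gh l (lam (Suc k))" if l: "l \<in> D" and y: "y \<in> X" for k l y
  proof -
    have "lagr f A b (x (Suc k)) (lam (Suc k)) - bregman h gh (lam (Suc k)) (lam k) / eta k
        \<le> lagr f A b y (lam (Suc k)) - bregman h gh (lam (Suc k)) (lam k) / eta k"
      using balm[of k] y unfolding saddle_point_def by blast
    then have a: "lagr f A b (x (Suc k)) (lam (Suc k)) \<le> lagr f A b y (lam (Suc k))" by simp
    have b: "lagr f A b (x (Suc k)) l - lagr f A b (x (Suc k)) (lam (Suc k))
        = (A *v x (Suc k) - b) \<bullet> (l - lam (Suc k))"
      by (simp add: lagr_def algebra_simps inner_commute)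
    have c: "bregman h gh l (lam k) - bregman h gh l (lam (Suc k)) - bregman h gh (lam (Suc k)) (lam k)
        = (gh (lam (Suc k)) - gh (lam k)) \<bullet> (l - lam (Suc k))"
      by (simp add: bregman_def algebra_simps)
    have d: "bregman h gh (lam (Suc k)) (lam k) \<ge> 0" using bnn lamD by blast
    have "eta k * (lagr f A b (x (Suc k)) l - lagr f A b y (lam (Suc k)))
        \<le> eta k * ((A *v x (Suc k) - b) \<bullet> (l - lam (Suc k)))"
      using a b eta_pos[of k] by (simp add: mult_left_mono)
    also have "\<dots> \<le> bregman h gh l (lam k) - bregman h gh l (lam (Suc k))"
      using opt[OF l, of k] c d by linarith
    finally show ?thesis .
  qed
  have tele: "(\<Sum>k<n. eta k * (lagr f A b (x (Suc k)) l - lagr f A b y (lam (Suc k))))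
      \<le> bregman h gh l (lam 0) - bregman h gh l (lam n)" if l: "l \<in> D" and y: "y \<in> X" for n l y
  proof (induction n)
    case 0 then show ?case by simp
  next
    case (Suc n) then show ?case using step[OF l y, of n] by simp
  qed
  define S where "S = (\<Sum>k<T. eta k)"
  have Spos: "S > 0" unfolding S_def using T eta_pos
    by (intro sum_pos) (auto simp: lessThan_empty_iff)
  define w where "w k = eta k / S" for k
  have wsum: "(\<Sum>k<T. w k) = 1" using Spos by (simp add: w_def S_def sum_divide_distrib[symmetric])
  have wnn: "w k \<ge> 0" for k using Spos eta_pos[of k] by (simp add: w_def)
  define xt where "xt = (\<Sum>k<T. eta k *\<^sub>R x (Suc k)) /\<^sub>R S"
  define lt where "lt = (\<Sum>k<T. eta k *\<^sub>R lam (Suc k)) /\<^sub>R S"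
  have xt: "xt = (\<Sum>k<T. w k *\<^sub>R x (Suc k))"
    by (simp add: xt_def w_def scaleR_sum_right divide_inverse_commute)
  have lt: "lt = (\<Sum>k<T. w k *\<^sub>R lam (Suc k))"
    by (simp add: lt_def w_def scaleR_sum_right divide_inverse_commute)
  have fxt: "f xt \<le> (\<Sum>k<T. w k * f (x (Suc k)))"
    unfolding xt using T by (intro convex_on_sum[OF _ _ f_convex wsum wnn]) (auto simp: lessThan_empty_iff)
  have Axt: "A *v xt = (\<Sum>k<T. w k *\<^sub>R (A *v x (Suc k)))"
    unfolding xt by (simp add: linear_sum[OF matrix_vector_mul_linear] matrix_vector_mult_scaleR)
  have lagr_xt: "lagr f A b xt l \<le> (\<Sum>k<T. w k * lagr f A b (x (Suc k)) l)" for l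
  proof -
    have "l \<bullet> (A *v xt - b) = (\<Sum>k<T. w k * (l \<bullet> (A *v x (Suc k) - b)))"
    proof -
      have "A *v xt - b = (\<Sum>k<T. w k *\<^sub>R (A *v x (Suc k) - b))"
        using wsum by (simp add: Axt scaleR_diff_right sum_subtractf scaleR_sum_left[symmetric])
      then show ?thesis by (simp add: inner_sum_right)
    qed
    then show ?thesis using fxt by (simp add: lagr_def distrib_left sum.distrib)
  qed
  have lagr_lt: "lagr f A b y lt = (\<Sum>k<T. w k * lagr f A b y (lam (Suc k)))" for y
  proof -
    have "f y = (\<Sum>k<T. w k * f y)" using wsum by (simp add: sum_distrib_right[symmetric])
    then show ?thesis by (simp add: lagr_def lt inner_sum_left distrib_left sum.distrib)
  qed
  have part1: "lagr f A b xt l - lagr f A b y lt \<le> bregman h gh l (lam 0) / S"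
    if l: "l \<in> D" and y: "y \<in> X" for l y
  proof -
    have "lagr f A b xt l - lagr f A b y lt
        \<le> (\<Sum>k<T. w k * (lagr f A b (x (Suc k)) l - lagr f A b y (lam (Suc k))))"
      using lagr_xt[of l] lagr_lt[of y] by (simp add: right_diff_distrib sum_subtractf)
    also have "\<dots> = (\<Sum>k<T. eta k * (lagr f A b (x (Suc k)) l - lagr f A b y (lam (Suc k)))) / S"
      by (simp add: w_def sum_divide_distrib)
    also have "\<dots> \<le> (bregman h gh l (lam 0) - bregman h gh l (lam T)) / S"
      using tele[OF l y, of T] Spos by (simp add: divide_right_mono)
    also have "\<dots> \<le> bregman h gh l (lam 0) / S"
      using bnn[OF l lamD[of T]] Spos by (simp add: divide_right_mono)
    finally show ?thesis .
  qed
  have ltD: "lt \<in> D"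
  proof (cases eqc)
    case True then show ?thesis by (simp add: D_def dual_dom_def)
  next
    case False
    have "0 \<le> lt $ i" for i
      unfolding lt using wnn lamD by (auto simp: D_def dual_dom_def False intro!: sum_nonneg)
    then show ?thesis by (simp add: D_def dual_dom_def False)
  qed
  have part2: "f xt - f xs + l \<bullet> (A *v xt - b) \<le> bregman h gh l (lam 0) / S"
    if xs: "xs \<in> X" "feasible eqc A b xs" and l: "l \<in> D" for xs l
  proof -
    have "lt \<bullet> (A *v xs - b) \<le> 0"
    proof (cases eqc)
      case True then show ?thesis using xs by (simp add: feasible_def)
    next
      case False
      have "lt $ i * (A *v xs - b) $ i \<le> 0" for i
        using ltD xs False by (auto simp: D_def dual_dom_def feasible_def mult_nonneg_nonpos)
      then show ?thesis by (simp add: inner_vec_def sum_nonpos)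
    qed
    then have "f xt - f xs + l \<bullet> (A *v xt - b) \<le> lagr f A b xt l - lagr f A b xs lt"
      by (simp add: lagr_def)
    then show ?thesis using part1[OF l xs(1)] by linarith
  qed
  show ?thesis
    using part1 part2 unfolding xt_def[symmetric] S_def[symmetric] lt_def[symmetric] D_def[symmetric]
    by blast
qed

end
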